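(* Let $T_{ab}$ be any rank-2 tensor. Then $T_{ac}T_b{}^c=f g_{ab}$ for some real $f$ if and only if $T_a{}^b$ is a null-cone preserving map, i.e. $k^aT_a{}^b$ is null or zero for every null vector $k$.
   Context: Lorentzian metric $g_{ab}$ of signature $(+,-,\dots,-)$ in dimension $N\ge2$; a vector $v$ is null if $v\neq0$ and $v_av^a=0$. *)

theory Defs
  imports "HOL-Analysis.Analysis"
begin

text \<open>Components of tensors w.r.t. a fixed basis indexed by the finite type 'n
  (dimension N = CARD('n)). A metric / covariant rank-2 tensor is a matrix
  g :: real^'n^'n with entries g_ab; a vector k^a is an element of real^'n.\<close>

definition lorentzian :: "real^'n^'n \<Rightarrow> bool" where
  "lorentzian g \<longleftrightarrow> transpose g = g \<and>
     (\<exists>P :: real^'n^'n. \<exists>i0. invertible P \<and>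
        transpose P ** g ** P = (\<chi> i j. if i = j then (if i = i0 then 1 else -1) else 0))"

definition metric_prod :: "real^'n^'n \<Rightarrow> real^'n \<Rightarrow> real^'n \<Rightarrow> real" where
  "metric_prod g v w = v \<bullet> (g *v w)"

definition is_null :: "real^'n^'n \<Rightarrow> real^'n \<Rightarrow> bool" where
  "is_null g v \<longleftrightarrow> v \<noteq> 0 \<and> metric_prod g v v = 0"

text \<open>Index raising: T_a^b = T_ac g^cb, with g^ab the inverse metric.\<close>
definition raise2 :: "real^'n^'n \<Rightarrow> real^'n^'n \<Rightarrow> real^'n^'n" where
  "raise2 g T = T ** matrix_inv g"

definition contract_vec :: "real^'n \<Rightarrow> real^'n^'n \<Rightarrow> real^'n" where
  "contract_vec k M = k v* M"

text \<open>T_ac T_b^c = T_ac g^cd T_bd\<close>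
definition TT_contr :: "real^'n^'n \<Rightarrow> real^'n^'n \<Rightarrow> real^'n^'n" where
  "TT_contr g T = T ** matrix_inv g ** transpose T"

definition null_cone_preserving :: "real^'n^'n \<Rightarrow> real^'n^'n \<Rightarrow> bool" where
  "null_cone_preserving g M \<longleftrightarrow>
     (\<forall>k. is_null g k \<longrightarrow> is_null g (contract_vec k M) \<or> contract_vec k M = 0)"

end

theory Submission
  imports Defs
begin

lemma ax_entry: "axis i (1::real) \<bullet> ((A::real^'n^'n) *v axis j 1) = A$i$j"
  by (simp add: inner_axis' matrix_vector_mult_basis column_def)

lemma quad3:
  fixes A :: "real^'n^'n"
  shows "(a *\<^sub>R axis i 1 + b *\<^sub>R axis j 1 + c *\<^sub>R axis l 1) \<bullet> (A *v (a *\<^sub>R axis i 1 + b *\<^sub>R axis j 1 + c *\<^sub>R axis l 1))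
   = a*a*A$i$i + b*b*A$j$j + c*c*A$l$l + a*b*(A$i$j + A$j$i) + a*c*(A$i$l+A$l$i) + b*c*(A$j$l+A$l$j)"
  by (simp add: matrix_vector_right_distrib matrix_vector_mult_scaleR inner_add_left inner_add_right ax_entry algebra_simps)

lemma qconj:
  fixes A P :: "real^'n^'n"
  shows "(P *v x) \<bullet> (A *v (P *v x)) = x \<bullet> ((transpose P ** A ** P) *v x)"
proof -
  have "(P *v x) \<bullet> (A *v (P *v x)) = (x v* transpose P) \<bullet> (A *v (P *v x))" by simp
  also have "\<dots> = x \<bullet> (transpose P *v (A *v (P *v x)))" by (rule dot_lmul_matrix)
  also have "\<dots> = x \<bullet> ((transpose P ** A ** P) *v x)" by (simp add: matrix_vector_mul_assoc matrix_mul_assoc)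
  finally show ?thesis .
qed

lemma eta_lemma:
  fixes S :: "real^'n^'n" and i0 :: 'n
  defines "E \<equiv> (\<chi> i j. if i = j then (if i = i0 then 1 else -1) else (0::real))"
  assumes symS: "\<And>i j. S$i$j = S$j$i"
    and hyp: "\<And>x. x \<noteq> 0 \<Longrightarrow> x \<bullet> (E *v x) = 0 \<Longrightarrow> x \<bullet> (S *v x) = 0"
  shows "S = S$i0$i0 *\<^sub>R E"
proof -
  have Ee: "E$i$j = (if i = j then (if i = i0 then 1 else -1) else 0)" for i j
    unfolding E_def by simp
  have nz: "(a *\<^sub>R axis i0 1 + b *\<^sub>R axis j 1 + c *\<^sub>R axis l 1) \<noteq> (0::real^'n)"
    if "j \<noteq> i0" "l \<noteq> i0" "a \<noteq> 0" for a b c j l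
  proof
    assume "(a *\<^sub>R axis i0 1 + b *\<^sub>R axis j 1 + c *\<^sub>R axis l 1) = (0::real^'n)"
    hence "(a *\<^sub>R axis i0 1 + b *\<^sub>R axis j 1 + c *\<^sub>R axis l (1::real)) $ i0 = 0" by simp
    thus False using that by (simp add: axis_def)
  qed
  have H: "a*a*S$i0$i0 + b*b*S$j$j + c*c*S$l$l + a*b*(S$i0$j + S$j$i0) + a*c*(S$i0$l+S$l$i0) + b*c*(S$j$l+S$l$j) = 0"
    if "j \<noteq> i0" "l \<noteq> i0" "a \<noteq> 0"
      "a*a*E$i0$i0 + b*b*E$j$j + c*c*E$l$l + a*b*(E$i0$j + E$j$i0) + a*c*(E$i0$l+E$l$i0) + b*c*(E$j$l+E$l$j) = 0"
    for a b c j l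
    using hyp[OF nz[OF that(1,2,3), of b c]] that(4) by (simp only: quad3)
  have off0: "S$i0$j = 0" and diag: "S$j$j = - S$i0$i0" if "j \<noteq> i0" for j
  proof -
    have 1: "S$i0$i0 + S$j$j + 2 * S$i0$j = 0"
      using H[OF that that, of 1 1 0] that symS[of j i0] by (simp add: Ee)
    have 2: "S$i0$i0 + S$j$j - 2 * S$i0$j = 0"
      using H[OF that that, of 1 "-1" 0] that symS[of j i0] by (simp add: Ee)
    from 1 2 show "S$i0$j = 0" by linarith
    from 1 2 show "S$j$j = - S$i0$i0" by linarith
  qed
  have off: "S$j$l = 0" if "j \<noteq> i0" "l \<noteq> i0" "j \<noteq> l" for j l
  proof -
    have "25*S$i0$i0 + 9*S$j$j + 16*S$l$l + 15*(S$i0$j + S$j$i0) + 20*(S$i0$l+S$l$i0) + 12*(S$j$l+S$l$j) = 0"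
      using H[OF that(1,2), of 5 3 4] that by (simp add: Ee)
    thus ?thesis using off0[OF that(1)] off0[OF that(2)] diag[OF that(1)] diag[OF that(2)]
      symS[of j i0] symS[of l i0] symS[of l j] by (simp add: algebra_simps)
  qed
  show ?thesis
    unfolding vec_eq_iff
  proof (intro allI)
    fix i j
    show "S$i$j = (S$i0$i0 *\<^sub>R E)$i$j"
    proof (cases "i = i0")
      case True
      then show ?thesis using off0[of j] by (cases "j = i0") (auto simp: Ee)
    next
      case False
      then show ?thesis using off0[of i] symS[of i i0] off[of i j] diag[of i]
        by (cases "j = i0"; cases "i = j") (auto simp: Ee)
    qed
  qed
qed

lemma scaleR_mv: "((f::real) *\<^sub>R (A::real^'n^'m)) *v x = f *\<^sub>R (A *v x)"
  by (simp add: vec_eq_iff matrix_vector_mult_def sum_distrib_left algebra_simps)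

lemma inv_props:
  fixes g :: "real^'n^'n"
  assumes "invertible g"
  shows "g ** matrix_inv g = mat 1" "matrix_inv g ** g = mat 1"
  using someI_ex[OF assms[unfolded invertible_def]] unfolding matrix_inv_def by auto

theorem mainTheorem8:
  fixes g T :: "real^'n^'n"
  assumes "CARD('n) \<ge> 2"
    and "lorentzian g"
  shows "(\<exists>f::real. TT_contr g T = f *\<^sub>R g) \<longleftrightarrow> null_cone_preserving g (raise2 g T)"
proof -
  from assms(2) obtain P :: "real^'n^'n" and i0 where gs: "transpose g = g" and Pi: "invertible P"
    and E: "transpose P ** g ** P = (\<chi> i j. if i = j then (if i = i0 then 1 else -1) else 0)"
    unfolding lorentzian_def by blast
  define Et :: "real^'n^'n" where "Et = (\<chi> i j. if i = j then (if i = i0 then 1 else -1) else 0)"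
  from Pi obtain Q where PQ: "P ** Q = mat 1" and QP: "Q ** P = mat 1" unfolding invertible_def by blast
  have EE: "Et ** Et = mat 1"
  proof -
    have Ee: "Et$i$j = (if i = j then (if i = i0 then 1 else -1) else 0)" for i j
      unfolding Et_def by simp
    have "(\<Sum>k\<in>UNIV. Et$i$k * Et$k$j) = (\<Sum>k\<in>UNIV. if k = i then Et$i$i * Et$i$j else 0)" for i j
      by (rule sum.cong) (auto simp: Ee)
    thus ?thesis by (simp add: matrix_matrix_mult_def mat_def vec_eq_iff Ee)
  qed
  have gQ: "g = transpose Q ** Et ** Q"
  proof -
    have "transpose Q ** Et ** Q = transpose Q ** (transpose P ** g ** P) ** Q" using E Et_def by simp
    also have "\<dots> = transpose (P ** Q) ** g ** (P ** Q)"
      by (simp add: matrix_transpose_mul matrix_mul_assoc)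
    finally show ?thesis using PQ by simp
  qed
  have Qi: "invertible Q" using PQ QP unfolding invertible_def by blast
  have QTi: "invertible (transpose Q)" using PQ QP unfolding invertible_def
    by (metis matrix_transpose_mul transpose_mat)
  have Ei: "invertible Et" using EE unfolding invertible_def by blast
  have gi: "invertible g" using gQ invertible_mult[OF invertible_mult[OF QTi Ei] Qi] by simp
  define G where "G = matrix_inv g"
  have gG: "g ** G = mat 1" and Gg: "G ** g = mat 1" using inv_props[OF gi] G_def by auto
  have GT: "transpose G = G"
  proof -
    have "transpose G ** g = mat 1" using gG gs by (metis matrix_transpose_mul transpose_mat)
    have "transpose G = transpose G ** (g ** G)" using gG by simp
    also have "\<dots> = (transpose G ** g) ** G" by (simp only: matrix_mul_assoc)
    also have "\<dots> = G" using \<open>transpose G ** g = mat 1\<close> by simp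
    finally show ?thesis .
  qed
  define S where "S = T ** G ** transpose T"
  have SS: "TT_contr g T = S" unfolding TT_contr_def S_def G_def ..
  have ST: "transpose S = S" unfolding S_def using GT by (simp add: matrix_transpose_mul matrix_mul_assoc)
  have symS: "S$i$j = S$j$i" for i j
  proof -
    have "S$i$j = (transpose S)$i$j" using ST by simp
    also have "\<dots> = S$j$i" by (simp add: transpose_def)
    finally show ?thesis .
  qed
  have key: "metric_prod g (contract_vec k (raise2 g T)) (contract_vec k (raise2 g T)) = k \<bullet> (S *v k)" for k
  proof -
    have c: "contract_vec k (raise2 g T) = (G ** transpose T) *v k"
    proof -
      have "contract_vec k (raise2 g T) = transpose (T ** G) *v k"
        unfolding contract_vec_def raise2_def G_def[symmetric] by simp
      also have "\<dots> = (G ** transpose T) *v k" using GT by (simp only: matrix_transpose_mul)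
      finally show ?thesis .
    qed
    have "metric_prod g (contract_vec k (raise2 g T)) (contract_vec k (raise2 g T))
       = k \<bullet> ((transpose (G ** transpose T) ** g ** (G ** transpose T)) *v k)"
      unfolding metric_prod_def c by (rule qconj)
    also have "transpose (G ** transpose T) ** g ** (G ** transpose T) = T ** (G ** g) ** G ** transpose T"
      using GT by (simp add: matrix_transpose_mul matrix_mul_assoc)
    also have "\<dots> = S" using Gg S_def by simp
    finally show ?thesis .
  qed
  have ncp: "null_cone_preserving g (raise2 g T) \<longleftrightarrow> (\<forall>k. is_null g k \<longrightarrow> k \<bullet> (S *v k) = 0)"
  proof -
    have "(is_null g w \<or> w = 0) \<longleftrightarrow> metric_prod g w w = 0" for w
      unfolding is_null_def metric_prod_def by auto
    thus ?thesis unfolding null_cone_preserving_def using key by simp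
  qed
  show ?thesis unfolding SS ncp
  proof
    assume "\<exists>f. S = f *\<^sub>R g"
    then obtain f where "S = f *\<^sub>R g" by blast
    thus "\<forall>k. is_null g k \<longrightarrow> k \<bullet> (S *v k) = 0"
      by (simp add: is_null_def metric_prod_def scaleR_mv)
  next
    assume h: "\<forall>k. is_null g k \<longrightarrow> k \<bullet> (S *v k) = 0"
    define S' where "S' = transpose P ** S ** P"
    have symS': "S'$i$j = S'$j$i" for i j
    proof -
      have "transpose S' = S'" unfolding S'_def using ST by (simp add: matrix_transpose_mul matrix_mul_assoc)
      hence "S'$i$j = (transpose S')$i$j" by simp
      also have "\<dots> = S'$j$i" by (simp add: transpose_def)
      finally show ?thesis .
    qed
    have hyp: "x \<bullet> (S' *v x) = 0" if "x \<noteq> 0" "x \<bullet> (Et *v x) = 0" for x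
    proof -
      have "P *v x \<noteq> 0"
      proof
        assume "P *v x = 0"
        hence "Q *v (P *v x) = 0" by simp
        thus False using QP that(1) by (simp add: matrix_vector_mul_assoc)
      qed
      moreover have "(P *v x) \<bullet> (g *v (P *v x)) = 0" using qconj[where P=P and A=g and x=x] E Et_def that(2) by simp
      ultimately have "(P *v x) \<bullet> (S *v (P *v x)) = 0" using h by (simp add: is_null_def metric_prod_def)
      thus ?thesis using qconj[where P=P and A=S and x=x] S'_def by simp
    qed
    have "S' = S'$i0$i0 *\<^sub>R Et"
      unfolding Et_def by (rule eta_lemma[OF symS' hyp[unfolded Et_def]])
    moreover have "transpose Q ** (c *\<^sub>R Et) ** Q = c *\<^sub>R (transpose Q ** Et ** Q)" for c :: real
      by (simp add: matrix_scalar_ac scalar_matrix_assoc)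
    ultimately have "transpose Q ** S' ** Q = S'$i0$i0 *\<^sub>R (transpose Q ** Et ** Q)"
      by metis
    moreover have "transpose Q ** S' ** Q = S"
    proof -
      have "transpose Q ** S' ** Q = transpose (P ** Q) ** S ** (P ** Q)"
        unfolding S'_def by (simp add: matrix_transpose_mul matrix_mul_assoc)
      thus ?thesis using PQ by simp
    qed
    ultimately have "S = S'$i0$i0 *\<^sub>R g" using gQ by simp
    thus "\<exists>f. S = f *\<^sub>R g" by blast
  qed
qed

end
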